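(* Let $\gamma$, $r$ be as in the context, fix $s_0$, and let $\epsilon>0$ be a sufficiently small number. Let $F:A_{s_0,\epsilon}\to\mathbb{R}$ be a $C^\infty$ function such that for every $s$ with $|s-s_0|<\epsilon$ the restriction of $F$ to the circle $C_s$ coincides with the restriction to $C_s$ of some polynomial $F_s$ in two variables of degree at most $N$. Then $F$ is (the restriction of) a polynomial in $x_1,x_2$ of degree at most $2N$.
   Context: $\gamma$ is a smooth simple closed curve in $\mathbb{R}^2$ parametrized by arc length $s$, $r>0$ is less than half of the maximal radius of a tubular neighbourhood of $\gamma$. For each $s$, $C_s=\{x:|x-\gamma(s)|=r\}$, and $A_{s_0,\epsilon}=\bigcup_{s:|s-s_0|\le\epsilon}C_s$. *)

theory Defs
  imports "HOL-Analysis.Analysis"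
begin

fun Ck_on :: "nat \<Rightarrow> 'a::euclidean_space set \<Rightarrow> ('a \<Rightarrow> 'b::real_normed_vector) \<Rightarrow> bool" where
  "Ck_on 0 U f = continuous_on U f"
| "Ck_on (Suc k) U f = (f differentiable_on U \<and> continuous_on U f \<and>
      (\<forall>b\<in>Basis. Ck_on k U (\<lambda>x. frechet_derivative f (at x) b)))"

definition smooth_on :: "'a::euclidean_space set \<Rightarrow> ('a \<Rightarrow> 'b::real_normed_vector) \<Rightarrow> bool" where
  "smooth_on U f \<longleftrightarrow> open U \<and> (\<forall>k. Ck_on k U f)"

definition smooth_on_set :: "'a::euclidean_space set \<Rightarrow> ('a \<Rightarrow> 'b::real_normed_vector) \<Rightarrow> bool" where
  "smooth_on_set A f \<longleftrightarrow> (\<exists>U g. open U \<and> A \<subseteq> U \<and> smooth_on U g \<and> (\<forall>x\<in>A. g x = f x))"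

definition arclength_simple_closed_curve :: "(real \<Rightarrow> real \<times> real) \<Rightarrow> real \<Rightarrow> bool" where
  "arclength_simple_closed_curve \<gamma> L \<longleftrightarrow> L > 0 \<and> smooth_on UNIV \<gamma> \<and>
     (\<forall>s. \<gamma> (s + L) = \<gamma> s) \<and> inj_on \<gamma> {0..<L} \<and>
     (\<forall>s. norm (vector_derivative \<gamma> (at s)) = 1)"

definition unit_tangent :: "(real \<Rightarrow> real \<times> real) \<Rightarrow> real \<Rightarrow> real \<times> real" where
  "unit_tangent \<gamma> s = vector_derivative \<gamma> (at s)"

definition unit_normal :: "(real \<Rightarrow> real \<times> real) \<Rightarrow> real \<Rightarrow> real \<times> real" where
  "unit_normal \<gamma> s = (- snd (unit_tangent \<gamma> s), fst (unit_tangent \<gamma> s))"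

definition curvature :: "(real \<Rightarrow> real \<times> real) \<Rightarrow> real \<Rightarrow> real" where
  "curvature \<gamma> s = vector_derivative (unit_tangent \<gamma>) (at s) \<bullet> unit_normal \<gamma> s"

text \<open>rho is the radius of a tubular neighbourhood of the closed curve of length L:
  the normal map (s,t) \<mapsto> gamma s + t nu(s) is injective on [0,L) \<times> (-rho,rho) and a local
  diffeomorphism there (its Jacobian 1 - t kappa(s) does not vanish).\<close>
definition tubular_radius :: "(real \<Rightarrow> real \<times> real) \<Rightarrow> real \<Rightarrow> real \<Rightarrow> bool" where
  "tubular_radius \<gamma> L \<rho> \<longleftrightarrow> \<rho> > 0 \<and>
     inj_on (\<lambda>(s, t). \<gamma> s + t *\<^sub>R unit_normal \<gamma> s) ({0..<L} \<times> {-\<rho><..<\<rho>}) \<and>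
     (\<forall>s t. \<bar>t\<bar> < \<rho> \<longrightarrow> 1 - t * curvature \<gamma> s \<noteq> 0)"

definition circ :: "(real \<Rightarrow> real \<times> real) \<Rightarrow> real \<Rightarrow> real \<Rightarrow> (real \<times> real) set" where
  "circ \<gamma> r s = {x. dist x (\<gamma> s) = r}"

definition Aset :: "(real \<Rightarrow> real \<times> real) \<Rightarrow> real \<Rightarrow> real \<Rightarrow> real \<Rightarrow> (real \<times> real) set" where
  "Aset \<gamma> r s0 \<epsilon> = (\<Union>s\<in>{s. \<bar>s - s0\<bar> \<le> \<epsilon>}. circ \<gamma> r s)"

definition poly2 :: "nat \<Rightarrow> (nat \<Rightarrow> nat \<Rightarrow> real) \<Rightarrow> real \<times> real \<Rightarrow> real" where
  "poly2 N c x = (\<Sum>i\<le>N. \<Sum>j\<le>N - i. c i j * fst x ^ i * snd x ^ j)"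

definition is_poly2 :: "nat \<Rightarrow> (real \<times> real \<Rightarrow> real) \<Rightarrow> bool" where
  "is_poly2 N P \<longleftrightarrow> (\<exists>c. \<forall>x. P x = poly2 N c x)"

end

theory Submission
  imports Defs "HOL-Computational_Algebra.Polynomial"
begin

lemma is_poly2_I:
  fixes K :: "'k set"
  assumes fin: "finite K" and deg: "\<And>k. k \<in> K \<Longrightarrow> da k + db k \<le> n"
    and f: "\<And>x. f x = (\<Sum>k\<in>K. e k * fst x ^ da k * snd x ^ db k)"
  shows "is_poly2 n f"
proof -
  define T where "T = Sigma {..n} (\<lambda>i. {..n-i})"
  define c where "c i j = (\<Sum>k\<in>{k\<in>K. (da k, db k) = (i,j)}. e k)" for i j
  have "f x = poly2 n c x" for x
  proof -
    have fT: "finite T" unfolding T_def by auto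
    have sub: "(\<lambda>k. (da k, db k)) ` K \<subseteq> T" using deg unfolding T_def by force
    have "poly2 n c x = (\<Sum>(i,j)\<in>T. c i j * fst x ^ i * snd x ^ j)"
      unfolding poly2_def T_def by (simp add: sum.Sigma)
    also have "\<dots> = (\<Sum>y\<in>T. \<Sum>k\<in>{k\<in>K. (da k, db k) = y}. e k * fst x ^ da k * snd x ^ db k)"
      unfolding c_def by (auto simp: sum_distrib_right intro!: sum.cong)
    also have "\<dots> = (\<Sum>k\<in>K. e k * fst x ^ da k * snd x ^ db k)"
      by (rule sum.group[OF fin fT sub])
    finally show ?thesis using f by simp
  qed
  then show ?thesis unfolding is_poly2_def by blast
qed

lemma is_poly2_E:
  assumes "is_poly2 n f"
  obtains K :: "(nat\<times>nat) set" and e da db where "finite K" "\<And>k. k \<in> K \<Longrightarrow> da k + db k \<le> n"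
    "\<And>x. f x = (\<Sum>k\<in>K. e k * fst x ^ da k * snd x ^ db k)"
proof -
  obtain c where c: "\<And>x. f x = poly2 n c x" using assms unfolding is_poly2_def by blast
  show ?thesis
  proof (rule that[of "Sigma {..n} (\<lambda>i. {..n-i})" fst snd "\<lambda>(i,j). c i j"])
    show "finite (Sigma {..n} (\<lambda>i. {..n-i}))" by auto
    show "\<And>k. k \<in> Sigma {..n} (\<lambda>i. {..n-i}) \<Longrightarrow> fst k + snd k \<le> n" by auto
    show "f x = (\<Sum>k\<in>Sigma {..n} (\<lambda>i. {..n-i}). (case k of (i,j) \<Rightarrow> c i j) * fst x ^ fst k * snd x ^ snd k)" for x
      unfolding c poly2_def by (simp add: sum.Sigma split_beta)
  qed
qed

lemma is_poly2_mono: "is_poly2 m f \<Longrightarrow> m \<le> n \<Longrightarrow> is_poly2 n f"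
proof -
  assume "is_poly2 m f" "m \<le> n"
  then show ?thesis
  proof (elim is_poly2_E)
    fix K :: "(nat\<times>nat) set" and e da db
    assume "finite K" "\<And>k. k \<in> K \<Longrightarrow> da k + db k \<le> m" "\<And>x. f x = (\<Sum>k\<in>K. e k * fst x ^ da k * snd x ^ db k)"
    then show ?thesis using \<open>m \<le> n\<close> by (intro is_poly2_I[of K da db n f e]) (auto intro: le_trans)
  qed
qed

lemma is_poly2_const: "is_poly2 n (\<lambda>x. a)"
  by (rule is_poly2_I[of "{0::nat}" "\<lambda>_. 0" "\<lambda>_. 0" n _ "\<lambda>_. a"]) auto

lemma is_poly2_fst: "is_poly2 1 fst"
  by (rule is_poly2_I[of "{0::nat}" "\<lambda>_. 1" "\<lambda>_. 0" 1 _ "\<lambda>_. 1"]) auto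

lemma is_poly2_snd: "is_poly2 1 snd"
  by (rule is_poly2_I[of "{0::nat}" "\<lambda>_. 0" "\<lambda>_. 1" 1 _ "\<lambda>_. 1"]) auto

lemma is_poly2_add: "is_poly2 n f \<Longrightarrow> is_poly2 n g \<Longrightarrow> is_poly2 n (\<lambda>x. f x + g x)"
  unfolding is_poly2_def
proof (elim exE)
  fix c d assume c: "\<forall>x. f x = poly2 n c x" and d: "\<forall>x. g x = poly2 n d x"
  show "\<exists>e. \<forall>x. f x + g x = poly2 n e x"
    by (rule exI[of _ "\<lambda>i j. c i j + d i j"]) (simp add: c d poly2_def distrib_right sum.distrib)
qed

lemma is_poly2_mult:
  assumes "is_poly2 m f" "is_poly2 n g" shows "is_poly2 (m + n) (\<lambda>x. f x * g x)"
proof -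
  obtain K1 :: "(nat\<times>nat) set" and e1 a1 b1 where 1: "finite K1" "\<And>k. k \<in> K1 \<Longrightarrow> a1 k + b1 k \<le> m"
    "\<And>x. f x = (\<Sum>k\<in>K1. e1 k * fst x ^ a1 k * snd x ^ b1 k)"
    by (rule is_poly2_E[OF assms(1)], rule that)
  obtain K2 :: "(nat\<times>nat) set" and e2 a2 b2 where 2: "finite K2" "\<And>k. k \<in> K2 \<Longrightarrow> a2 k + b2 k \<le> n"
    "\<And>x. g x = (\<Sum>k\<in>K2. e2 k * fst x ^ a2 k * snd x ^ b2 k)"
    by (rule is_poly2_E[OF assms(2)], rule that)
  show ?thesis
  proof (rule is_poly2_I[of "K1 \<times> K2" "\<lambda>(k,l). a1 k + a2 l" "\<lambda>(k,l). b1 k + b2 l" _ _ "\<lambda>(k,l). e1 k * e2 l"])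
    show "finite (K1 \<times> K2)" using 1 2 by auto
    show "\<And>k. k \<in> K1 \<times> K2 \<Longrightarrow> (case k of (k, l) \<Rightarrow> a1 k + a2 l) + (case k of (k, l) \<Rightarrow> b1 k + b2 l) \<le> m + n"
      using 1(2) 2(2) by fastforce
    show "f x * g x = (\<Sum>k\<in>K1 \<times> K2. (case k of (k, l) \<Rightarrow> e1 k * e2 l) * fst x ^ (case k of (k, l) \<Rightarrow> a1 k + a2 l) *
             snd x ^ (case k of (k, l) \<Rightarrow> b1 k + b2 l))" for x
      unfolding 1(3) 2(3) sum_product sum.cartesian_product
      by (rule sum.cong) (auto simp: power_add)
  qed
qed

lemma is_poly2_scale: "is_poly2 n f \<Longrightarrow> is_poly2 n (\<lambda>x. a * f x)"
  using is_poly2_mult[OF is_poly2_const[of 0 a]] by simp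

lemma is_poly2_diff: "is_poly2 n f \<Longrightarrow> is_poly2 n g \<Longrightarrow> is_poly2 n (\<lambda>x. f x - g x)"
  using is_poly2_add[of n f "\<lambda>x. (-1) * g x"] is_poly2_scale[of n g "-1"] by simp

lemma is_poly2_sum: "finite S \<Longrightarrow> (\<And>i. i \<in> S \<Longrightarrow> is_poly2 n (f i)) \<Longrightarrow> is_poly2 n (\<lambda>x. \<Sum>i\<in>S. f i x)"
  by (induction S rule: finite_induct) (auto intro: is_poly2_add is_poly2_const)

lemma is_poly2_pow: "is_poly2 n f \<Longrightarrow> is_poly2 (k * n) (\<lambda>x. f x ^ k)"
  by (induction k) (auto intro: is_poly2_const dest: is_poly2_mult[of n f "k*n" for k])

definition pt :: "real \<Rightarrow> real\<times>real \<Rightarrow> complex \<Rightarrow> real\<times>real" where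
  "pt r c w = (fst c + r * Re w, snd c + r * Im w)"

definition cdeg :: "real \<Rightarrow> nat \<Rightarrow> real\<times>real \<Rightarrow> (real\<times>real \<Rightarrow> real) \<Rightarrow> bool" where
  "cdeg r n c f \<longleftrightarrow> (\<exists>p. degree p \<le> 2*n \<and>
      (\<forall>w. cmod w = 1 \<longrightarrow> complex_of_real (f (pt r c w)) * w^n = poly p w))"

lemma unit_cnj: "cmod w = 1 \<Longrightarrow> cnj w * w = 1"
  by (metis complex_norm_square mult.commute of_real_1 power_one)

lemma cdeg_cong: "cdeg r n c f \<Longrightarrow> (\<And>w. cmod w = 1 \<Longrightarrow> f (pt r c w) = g (pt r c w)) \<Longrightarrow> cdeg r n c g"
  unfolding cdeg_def by metis

lemma cdeg_const: "cdeg r n c (\<lambda>x. a)"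
  unfolding cdeg_def
  by (rule exI[of _ "monom (complex_of_real a) n"]) (auto simp: poly_monom degree_monom_le intro: order_trans[OF degree_monom_le])

lemma cdeg_mono: assumes "cdeg r m c f" "m \<le> n" shows "cdeg r n c f"
proof -
  obtain p where p: "degree p \<le> 2*m" "\<And>w. cmod w = 1 \<Longrightarrow> complex_of_real (f (pt r c w)) * w^m = poly p w"
    using assms unfolding cdeg_def by blast
  show ?thesis unfolding cdeg_def
  proof (intro exI conjI allI impI)
    show "degree (p * monom 1 (n - m)) \<le> 2 * n"
      using p(1) assms(2) by (intro order_trans[OF degree_mult_le]) (auto intro: order_trans[OF add_mono[OF order.refl degree_monom_le]])
    fix w :: complex assume w: "cmod w = 1"
    have "complex_of_real (f (pt r c w)) * w^n = (complex_of_real (f (pt r c w)) * w^m) * w^(n-m)"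
      using assms(2) by (simp add: power_add[symmetric])
    also have "\<dots> = poly (p * monom 1 (n - m)) w" using p(2)[OF w] by (simp add: poly_monom)
    finally show "complex_of_real (f (pt r c w)) * w^n = poly (p * monom 1 (n - m)) w" .
  qed
qed

lemma cdeg_add: assumes "cdeg r n c f" "cdeg r n c g" shows "cdeg r n c (\<lambda>x. f x + g x)"
proof -
  obtain p where p: "degree p \<le> 2*n" "\<And>w. cmod w = 1 \<Longrightarrow> complex_of_real (f (pt r c w)) * w^n = poly p w"
    using assms unfolding cdeg_def by blast
  obtain q where q: "degree q \<le> 2*n" "\<And>w. cmod w = 1 \<Longrightarrow> complex_of_real (g (pt r c w)) * w^n = poly q w"
    using assms unfolding cdeg_def by blast
  show ?thesis unfolding cdeg_def
    by (rule exI[of _ "p + q"]) (use p q in \<open>auto simp: distrib_right degree_add_le\<close>)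
qed

lemma cdeg_mult: assumes "cdeg r m c f" "cdeg r n c g" shows "cdeg r (m+n) c (\<lambda>x. f x * g x)"
proof -
  obtain p where p: "degree p \<le> 2*m" "\<And>w. cmod w = 1 \<Longrightarrow> complex_of_real (f (pt r c w)) * w^m = poly p w"
    using assms unfolding cdeg_def by blast
  obtain q where q: "degree q \<le> 2*n" "\<And>w. cmod w = 1 \<Longrightarrow> complex_of_real (g (pt r c w)) * w^n = poly q w"
    using assms unfolding cdeg_def by blast
  show ?thesis unfolding cdeg_def
  proof (intro exI conjI allI impI)
    show "degree (p * q) \<le> 2 * (m+n)"
      using p(1) q(1) by (intro order_trans[OF degree_mult_le]) auto
    fix w :: complex assume w: "cmod w = 1"
    have "complex_of_real (f (pt r c w) * g (pt r c w)) * w^(m+n) =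
        (complex_of_real (f (pt r c w)) * w^m) * (complex_of_real (g (pt r c w)) * w^n)"
      by (simp add: power_add)
    also have "\<dots> = poly (p * q) w" using p(2)[OF w] q(2)[OF w] by simp
    finally show "complex_of_real (f (pt r c w) * g (pt r c w)) * w^(m+n) = poly (p * q) w" .
  qed
qed

lemma cdeg_fst: "cdeg r 1 c fst"
  unfolding cdeg_def
proof (intro exI conjI allI impI)
  show "degree [: complex_of_real (r/2), complex_of_real (fst c), complex_of_real (r/2) :] \<le> 2*1"
    by simp
  fix w :: complex assume w: "cmod w = 1"
  have h: "complex_of_real (Re w) * w = (w^2 + 1) / 2"
    using unit_cnj[OF w] by (simp add: complex_eq_iff power2_eq_square algebra_simps)
  have "complex_of_real (fst (pt r c w)) * w^1 = complex_of_real (fst c) * w + complex_of_real r * (complex_of_real (Re w) * w)"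
    unfolding pt_def by (simp add: algebra_simps)
  also have "\<dots> = poly [: complex_of_real (r/2), complex_of_real (fst c), complex_of_real (r/2) :] w"
    unfolding h by (simp add: algebra_simps power2_eq_square)
  finally show "complex_of_real (fst (pt r c w)) * w^1 = poly [: complex_of_real (r/2), complex_of_real (fst c), complex_of_real (r/2) :] w"
.
qed

lemma cdeg_snd: "cdeg r 1 c snd"
  unfolding cdeg_def
proof (intro exI conjI allI impI)
  show "degree [: \<i> * complex_of_real (r/2), complex_of_real (snd c), - \<i> * complex_of_real (r/2) :] \<le> 2*1"
    by simp
  fix w :: complex assume w: "cmod w = 1"
  have h: "complex_of_real (Im w) * w = - \<i> * (w^2 - 1) / 2"
    using unit_cnj[OF w] by (simp add: complex_eq_iff power2_eq_square algebra_simps)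
  have "complex_of_real (snd (pt r c w)) * w^1 = complex_of_real (snd c) * w + complex_of_real r * (complex_of_real (Im w) * w)"
    unfolding pt_def by (simp add: algebra_simps)
  also have "\<dots> = poly [: \<i> * complex_of_real (r/2), complex_of_real (snd c), - \<i> * complex_of_real (r/2) :] w"
    unfolding h by (simp add: field_simps power2_eq_square)
  finally show "complex_of_real (snd (pt r c w)) * w^1 = poly [: \<i> * complex_of_real (r/2), complex_of_real (snd c), - \<i> * complex_of_real (r/2) :] w" .
qed

lemma cdeg_sum: "finite S \<Longrightarrow> (\<And>i. i \<in> S \<Longrightarrow> cdeg r n c (f i)) \<Longrightarrow> cdeg r n c (\<lambda>x. \<Sum>i\<in>S. f i x)"
  by (induction S rule: finite_induct) (auto intro: cdeg_add cdeg_const)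

lemma cdeg_pow: "cdeg r n c f \<Longrightarrow> cdeg r (k * n) c (\<lambda>x. f x ^ k)"
  by (induction k) (auto intro: cdeg_const dest: cdeg_mult[of r n c f "k*n" for k])

lemma cdeg_prod: "finite S \<Longrightarrow> (\<And>i. i \<in> S \<Longrightarrow> cdeg r 1 c (f i)) \<Longrightarrow> cdeg r (card S) c (\<lambda>x. \<Prod>i\<in>S. f i x)"
proof (induction S rule: finite_induct)
  case empty then show ?case by (simp add: cdeg_const)
next
  case (insert a F)
  have "cdeg r (1 + card F) c (\<lambda>x. f a x * (\<Prod>i\<in>F. f i x))"
    using insert by (intro cdeg_mult) auto
  then show ?case using insert by simp
qed

lemma cdeg_of_poly2: assumes "is_poly2 n f" shows "cdeg r n c f"
proof -
  obtain K :: "(nat\<times>nat) set" and e da db where K: "finite K" "\<And>k. k \<in> K \<Longrightarrow> da k + db k \<le> n"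
    "\<And>x. f x = (\<Sum>k\<in>K. e k * fst x ^ da k * snd x ^ db k)"
    by (rule is_poly2_E[OF assms], rule that)
  have "cdeg r n c (\<lambda>x. \<Sum>k\<in>K. e k * fst x ^ da k * snd x ^ db k)"
  proof (rule cdeg_sum[OF K(1)])
    fix k assume k: "k \<in> K"
    have "cdeg r (0 + da k * 1 + db k * 1) c (\<lambda>x. e k * fst x ^ da k * snd x ^ db k)"
      by (intro cdeg_mult cdeg_const cdeg_pow cdeg_fst cdeg_snd)
    then show "cdeg r n c (\<lambda>x. e k * fst x ^ da k * snd x ^ db k)"
      by (rule cdeg_mono) (use K(2)[OF k] in simp)
  qed
  moreover have "f = (\<lambda>x. \<Sum>k\<in>K. e k * fst x ^ da k * snd x ^ db k)" using K(3) by (rule ext)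
  ultimately show ?thesis by simp
qed

definition qf :: "real \<Rightarrow> real\<times>real \<Rightarrow> real\<times>real \<Rightarrow> real" where
  "qf r c' x = (fst x - fst c')^2 + (snd x - snd c')^2 - r^2"

lemma is_poly2_qf: "is_poly2 2 (qf r c')"
proof -
  have a: "is_poly2 1 (\<lambda>x. fst x - fst c')" by (intro is_poly2_diff is_poly2_fst is_poly2_const)
  have b: "is_poly2 1 (\<lambda>x. snd x - snd c')" by (intro is_poly2_diff is_poly2_snd is_poly2_const)
  have "is_poly2 2 (\<lambda>x. (fst x - fst c')^2 + (snd x - snd c')^2 - r^2)"
    using is_poly2_pow[OF a, of 2] is_poly2_pow[OF b, of 2]
    by (intro is_poly2_diff is_poly2_add is_poly2_const) auto
  then show ?thesis unfolding qf_def[abs_def] .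
qed

lemma qf_pt: "complex_of_real (qf r c' (pt r c w)) =
   (Complex (fst c - fst c') (snd c - snd c') + complex_of_real r * w) *
   cnj (Complex (fst c - fst c') (snd c - snd c') + complex_of_real r * w) - complex_of_real (r^2)"
  unfolding qf_def pt_def by (simp add: complex_eq_iff power2_eq_square algebra_simps)

lemma cdeg_qf: "cdeg r 1 c (qf r c')"
  unfolding cdeg_def
proof (intro exI conjI allI impI)
  define d where "d = Complex (fst c - fst c') (snd c - snd c')"
  show "degree [: complex_of_real r * d, d * cnj d, complex_of_real r * cnj d :] \<le> 2*1" by simp
  fix w :: complex assume w: "cmod w = 1"
  have u: "cnj w * w = 1" by (rule unit_cnj[OF w])
  have "complex_of_real (qf r c' (pt r c w)) * w^1 = ((d + complex_of_real r * w) * cnj (d + complex_of_real r * w) - complex_of_real (r^2)) * w"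
    unfolding qf_pt d_def by simp
  also have "\<dots> = d * cnj d * w + complex_of_real r * d * (cnj w * w) + complex_of_real r * cnj d * w * w
        + complex_of_real (r^2) * w * (cnj w * w) - complex_of_real (r^2) * w"
    by (simp add: algebra_simps power2_eq_square)
  also have "\<dots> = poly [: complex_of_real r * d, d * cnj d, complex_of_real r * cnj d :] w"
    unfolding u by (simp add: algebra_simps power2_eq_square)
  finally show "complex_of_real (qf r c' (pt r c w)) * w^1 = poly [: complex_of_real r * d, d * cnj d, complex_of_real r * cnj d :] w" .
qed

lemma cdeg_zero:
  assumes "cdeg r n c f" "finite W" "card W > 2*n" "\<And>w. w \<in> W \<Longrightarrow> f (pt r c w) = 0"
    "\<And>w. w \<in> W \<Longrightarrow> cmod w = 1" "cmod w = 1"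
  shows "f (pt r c w) = 0"
proof -
  obtain p where p: "degree p \<le> 2*n" "\<And>w. cmod w = 1 \<Longrightarrow> complex_of_real (f (pt r c w)) * w^n = poly p w"
    using assms unfolding cdeg_def by blast
  have "p = 0"
  proof (rule ccontr)
    assume "p \<noteq> 0"
    have "W \<subseteq> {x. poly p x = 0}" using assms(4,5) p(2) by force
    then have "card W \<le> card {x. poly p x = 0}" by (intro card_mono poly_roots_finite \<open>p \<noteq> 0\<close>)
    also have "\<dots> \<le> degree p" by (rule card_poly_roots_bound[OF \<open>p \<noteq> 0\<close>])
    finally show False using p(1) assms(3) by linarith
  qed
  then have "complex_of_real (f (pt r c w)) * w^n = 0" using p(2)[OF assms(6)] by simp
  moreover have "w \<noteq> 0" using assms(6) by auto
  ultimately show ?thesis by simp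
qed

lemma is_poly2_Zpow:
  fixes c :: "real\<times>real" and r :: real
  defines "Z \<equiv> \<lambda>x. Complex ((fst x - fst c)/r) ((snd x - snd c)/r)"
  shows "is_poly2 j (\<lambda>x. Re (Z x ^ j)) \<and> is_poly2 j (\<lambda>x. Im (Z x ^ j))"
proof (induction j)
  case 0 then show ?case by (simp add: is_poly2_const)
next
  case (Suc j)
  have re: "is_poly2 1 (\<lambda>x. Re (Z x))" unfolding Z_def
    by (simp add: diff_divide_distrib, intro is_poly2_diff is_poly2_const)
       (use is_poly2_scale[OF is_poly2_fst, of "1/r"] in simp)
  have im: "is_poly2 1 (\<lambda>x. Im (Z x))" unfolding Z_def
    by (simp add: diff_divide_distrib, intro is_poly2_diff is_poly2_const)
       (use is_poly2_scale[OF is_poly2_snd, of "1/r"] in simp)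
  have "is_poly2 (1 + j) (\<lambda>x. Re (Z x) * Re (Z x ^ j) - Im (Z x) * Im (Z x ^ j))"
    using Suc re im by (intro is_poly2_diff is_poly2_mult) auto
  moreover have "is_poly2 (1 + j) (\<lambda>x. Re (Z x) * Im (Z x ^ j) + Im (Z x) * Re (Z x ^ j))"
    using Suc re im by (intro is_poly2_add is_poly2_mult) auto
  ultimately show ?case by simp
qed

lemma poly_sum_upto: fixes p :: "complex poly" assumes "degree p \<le> n" shows "poly p x = (\<Sum>i\<le>n. coeff p i * x ^ i)"
proof -
  have "(\<Sum>i\<le>degree p. coeff p i * x ^ i) = (\<Sum>i\<le>n. coeff p i * x ^ i)"
    by (rule sum.mono_neutral_left) (use assms in \<open>auto simp: coeff_eq_0\<close>)
  then show ?thesis by (simp add: poly_altdef)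
qed

lemma extend_poly2:
  fixes h :: "complex poly" and c :: "real\<times>real"
  assumes r: "r > 0" and h: "degree h \<le> 2*m"
  shows "\<exists>R. is_poly2 m R \<and> (\<forall>w. cmod w = 1 \<longrightarrow> R (pt r c w) = Re (poly h w / w^m))"
proof -
  define Z where "Z = (\<lambda>x. Complex ((fst x - fst c)/r) ((snd x - snd c)/r))"
  define \<phi> where "\<phi> = (\<lambda>k (z::complex). if m \<le> k then z ^ (k-m) else cnj z ^ (m-k))"
  define R where "R = (\<lambda>x. \<Sum>k\<le>2*m. Re (coeff h k * \<phi> k (Z x)))"
  have P: "is_poly2 j (\<lambda>x. Re (Z x ^ j)) \<and> is_poly2 j (\<lambda>x. Im (Z x ^ j))" for j
    unfolding Z_def by (rule is_poly2_Zpow)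
  have "is_poly2 m R" unfolding R_def
  proof (intro is_poly2_sum, simp)
    fix k assume k: "k \<in> {..2*m}"
    show "is_poly2 m (\<lambda>x. Re (coeff h k * \<phi> k (Z x)))"
    proof (cases "m \<le> k")
      case True
      have "is_poly2 (k-m) (\<lambda>x. Re (coeff h k) * Re (Z x ^ (k-m)) - Im (coeff h k) * Im (Z x ^ (k-m)))"
        using P by (intro is_poly2_diff is_poly2_scale) auto
      then have "is_poly2 m (\<lambda>x. Re (coeff h k) * Re (Z x ^ (k-m)) - Im (coeff h k) * Im (Z x ^ (k-m)))"
        by (rule is_poly2_mono) (use k in auto)
      then show ?thesis using True unfolding \<phi>_def by simp
    next
      case False
      have "is_poly2 (m-k) (\<lambda>x. Re (coeff h k) * Re (Z x ^ (m-k)) + Im (coeff h k) * Im (Z x ^ (m-k)))"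
        using P by (intro is_poly2_add is_poly2_scale) auto
      then have "is_poly2 m (\<lambda>x. Re (coeff h k) * Re (Z x ^ (m-k)) + Im (coeff h k) * Im (Z x ^ (m-k)))"
        by (rule is_poly2_mono) auto
      then show ?thesis using False unfolding \<phi>_def by (simp add: complex_cnj_power[symmetric] del: complex_cnj_power)
    qed
  qed
  moreover have "R (pt r c w) = Re (poly h w / w^m)" if w: "cmod w = 1" for w
  proof -
    have Zw: "Z (pt r c w) = w" using r unfolding Z_def pt_def by (simp add: complex_eq_iff)
    have u: "cnj w * w = 1" by (rule unit_cnj[OF w])
    have w0: "w \<noteq> 0" using w by auto
    have e: "\<phi> k w * w^m = w^k" for k
    proof (cases "m \<le> k")
      case True then show ?thesis unfolding \<phi>_def by (simp add: power_add[symmetric])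
    next
      case False
      then have "w^m = w^(m-k) * w^k" by (simp add: power_add[symmetric])
      then have "cnj w ^ (m-k) * w^m = (cnj w * w)^(m-k) * w^k" by (simp add: power_mult_distrib)
      then show ?thesis using False u unfolding \<phi>_def by simp
    qed
    have "(\<Sum>k\<le>2*m. coeff h k * \<phi> k w) * w^m = poly h w"
      unfolding poly_sum_upto[OF h] sum_distrib_right by (simp add: mult.assoc e)
    then have "(\<Sum>k\<le>2*m. coeff h k * \<phi> k w) = poly h w / w^m"
      using w0 by (simp add: eq_divide_eq)
    then have "Re (\<Sum>k\<le>2*m. coeff h k * \<phi> k w) = Re (poly h w / w^m)" by simp
    then show ?thesis unfolding R_def Zw Re_sum .
  qed
  ultimately show ?thesis by blast
qed

lemma quad_dvd:
  fixes q p :: "complex poly"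
  assumes "degree q = 2" "poly q a = 0" "poly q b = 0" "a \<noteq> b" "poly p a = 0" "poly p b = 0"
  shows "q dvd p"
proof -
  obtain p1 where p1: "p = [:-a,1:] * p1" using assms(5) by (auto simp: poly_eq_0_iff_dvd)
  have "poly p1 b = 0" using assms(4,6) p1 by simp
  then obtain p2 where p2: "p1 = [:-b,1:] * p2" by (auto simp: poly_eq_0_iff_dvd)
  obtain q1 where q1: "q = [:-a,1:] * q1" using assms(2) by (auto simp: poly_eq_0_iff_dvd)
  have "poly q1 b = 0" using assms(3,4) q1 by simp
  then obtain q2 where q2: "q1 = [:-b,1:] * q2" by (auto simp: poly_eq_0_iff_dvd)
  have "q2 \<noteq> 0" using assms(1) q1 q2 by auto
  then have "degree q = degree [:-a,1:] + (degree [:-b,1:] + degree q2)" using q1 q2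
    by (simp del: mult_pCons_left add: degree_mult_eq)
  then have "degree q = 2 + degree q2" by simp
  then have "degree q2 = 0" using assms(1) by simp
  then obtain k where k: "q2 = [:k:]" "k \<noteq> 0" using \<open>q2 \<noteq> 0\<close> by (metis degree_eq_zeroE pCons_0_0)
  have pp: "poly p x = (x - a) * ((x - b) * poly p2 x)" for x unfolding p1 p2 poly_mult by simp
  have qq: "poly q x = (x - a) * ((x - b) * k)" for x unfolding q1 q2 k(1) poly_mult by simp
  have "poly p = poly (q * (smult (inverse k) p2))"
    by (rule ext) (simp only: pp poly_mult qq poly_smult, use k(2) in \<open>simp add: field_simps\<close>)
  then have "p = q * (smult (inverse k) p2)" by (simp add: poly_eq_poly_eq_iff)
  then show ?thesis by (rule dvdI)
qed

lemma dist_cmod: "dist x y = cmod (Complex (fst x - fst y) (snd x - snd y))"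
  by (cases x; cases y) (simp add: dist_Pair_Pair dist_real_def cmod_def power2_abs)

lemma pt_diff: "Complex (fst (pt r c w) - fst c') (snd (pt r c w) - snd c') =
   complex_of_real r * w - Complex (fst c' - fst c) (snd c' - snd c)"
  by (simp add: pt_def complex_eq_iff)

lemma dist_pt: "r > 0 \<Longrightarrow> dist (pt r c w) c = r * cmod w"
proof -
  have "Complex 0 0 = 0" by (simp add: complex_eq_iff)
  then show "r > 0 \<Longrightarrow> dist (pt r c w) c = r * cmod w" unfolding dist_cmod pt_diff by (simp add: norm_mult)
qed

lemma on_circle_pt:
  assumes "r > 0" "dist x c = r"
  shows "\<exists>w. cmod w = 1 \<and> x = pt r c w"
proof (intro exI conjI)
  define w where "w = Complex ((fst x - fst c) / r) ((snd x - snd c) / r)"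
  have "w = Complex (fst x - fst c) (snd x - snd c) / complex_of_real r"
    unfolding w_def by (simp add: complex_eq_iff Re_divide Im_divide power2_eq_square)
  then show "cmod w = 1" using assms by (simp add: dist_cmod norm_divide)
  show "x = pt r c w" using assms(1) unfolding w_def pt_def by (cases x) simp
qed

lemma qf_zero_iff: "r > 0 \<Longrightarrow> qf r c' x = 0 \<longleftrightarrow> dist x c' = r"
proof -
  assume r: "r > 0"
  have "dist x c' ^ 2 = (fst x - fst c')^2 + (snd x - snd c')^2"
    unfolding dist_cmod cmod_def by simp
  then have "qf r c' x = dist x c' ^ 2 - r ^ 2" unfolding qf_def by simp
  then show ?thesis using r by (simp add: power2_eq_iff_nonneg)
qed

lemma two_intersections:
  assumes r: "r > 0" and d: "0 < dist c c'" "dist c c' < 2 * r"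
  shows "\<exists>w1 w2. w1 \<noteq> w2 \<and> cmod w1 = 1 \<and> cmod w2 = 1 \<and> dist (pt r c w1) c' = r \<and> dist (pt r c w2) c' = r"
proof -
  define D where "D = Complex (fst c' - fst c) (snd c' - snd c)"
  define \<delta> where "\<delta> = cmod D"
  have \<delta>: "\<delta> = dist c c'" unfolding \<delta>_def D_def dist_cmod
    by (simp add: cmod_def power2_commute)
  have \<delta>pos: "\<delta> > 0" using d \<delta> by simp
  define u where "u = D / complex_of_real \<delta>"
  have u: "cmod u = 1" using \<delta>pos unfolding u_def by (simp add: norm_divide \<delta>_def)
  have uD: "u * complex_of_real \<delta> = D" using \<delta>pos unfolding u_def by simp
  define s where "s = sqrt (1 - \<delta>^2 / (4 * r^2))"
  have lt: "\<delta>^2 / (4 * r^2) < 1" using d \<delta> r \<delta>pos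
  proof -
    have "\<delta>^2 < (2*r)^2" using d \<delta> \<delta>pos by (intro power_strict_mono) auto
    then show ?thesis using r by (simp add: divide_less_eq power_mult_distrib)
  qed
  have spos: "s > 0" unfolding s_def using lt by simp
  have s2: "s^2 = 1 - \<delta>^2 / (4 * r^2)" unfolding s_def using lt by simp
  define w where "w = (\<lambda>t::real. u * Complex (\<delta> / (2*r)) t)"
  have nw: "cmod (w t) = 1" if "t = s \<or> t = -s" for t
  proof -
    have "(\<delta> / (2*r))^2 + t^2 = 1" using that s2 r by (auto simp: power2_eq_square field_simps)
    then show ?thesis unfolding w_def norm_mult u by (simp add: cmod_def)
  qed
  have dw: "dist (pt r c (w t)) c' = r" if "t = s \<or> t = -s" for t
  proof -
    have "complex_of_real r * w t - D = u * Complex (- \<delta>/2) (r * t)"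
      unfolding w_def uD[symmetric] using r by (simp add: complex_eq_iff algebra_simps)
    moreover have "(\<delta>/2)^2 + (r*t)^2 = r^2"
      using that s2 r by (auto simp: power2_eq_square field_simps)
    moreover have "cmod (Complex (- \<delta>/2) (r * t)) = r"
      using calculation(2) r by (simp add: complex_norm)
    ultimately have "cmod (complex_of_real r * w t - D) = r"
      by (simp only: norm_mult u)
    then show ?thesis unfolding dist_cmod pt_diff D_def .
  qed
  have "w s \<noteq> w (-s)" using spos u unfolding w_def by (auto simp: complex_eq_iff cmod_def)
  then show ?thesis using nw dw by blast
qed

definition qpoly :: "real \<Rightarrow> real\<times>real \<Rightarrow> real\<times>real \<Rightarrow> complex poly" where
  "qpoly r c c' = (let d = Complex (fst c - fst c') (snd c - snd c') in
     [: complex_of_real r * d, d * cnj d, complex_of_real r * cnj d :])"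

lemma qpoly_eval:
  assumes w: "cmod w = 1"
  shows "complex_of_real (qf r c' (pt r c w)) * w = poly (qpoly r c c') w"
proof -
  define d where "d = Complex (fst c - fst c') (snd c - snd c')"
  have u: "cnj w * w = 1" by (rule unit_cnj[OF w])
  have "complex_of_real (qf r c' (pt r c w)) * w = ((d + complex_of_real r * w) * cnj (d + complex_of_real r * w) - complex_of_real (r^2)) * w"
    unfolding qf_pt d_def by simp
  also have "\<dots> = d * cnj d * w + complex_of_real r * d * (cnj w * w) + complex_of_real r * cnj d * w * w
        + complex_of_real (r^2) * w * (cnj w * w) - complex_of_real (r^2) * w"
    by (simp add: algebra_simps power2_eq_square)
  also have "\<dots> = poly (qpoly r c c') w"
    unfolding u qpoly_def d_def[symmetric] Let_def by (simp add: algebra_simps power2_eq_square)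
  finally show ?thesis .
qed

lemma qpoly_degree: "r > 0 \<Longrightarrow> c \<noteq> c' \<Longrightarrow> degree (qpoly r c c') = 2"
  unfolding qpoly_def Let_def by (cases c; cases c') (auto simp: complex_eq_iff)

lemma div_loop:
  fixes p :: "complex poly" and qs :: "nat \<Rightarrow> complex poly"
  assumes deg: "\<And>j. j < k \<Longrightarrow> degree (qs j) = 2"
    and roots: "\<And>j. j < k \<Longrightarrow> \<exists>a b. a \<noteq> b \<and> poly (qs j) a = 0 \<and> poly (qs j) b = 0 \<and> poly p a = 0 \<and> poly p b = 0 \<and>
        (\<forall>i<k. i \<noteq> j \<longrightarrow> poly (qs i) a \<noteq> 0 \<and> poly (qs i) b \<noteq> 0)"
  shows "i \<le> k \<Longrightarrow> \<exists>h. p = (\<Prod>j<i. qs j) * h \<and> (h = 0 \<or> degree h + 2 * i = degree p)"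
proof (induction i)
  case 0 then show ?case by auto
next
  case (Suc i)
  then obtain h where h: "p = (\<Prod>j<i. qs j) * h" "h = 0 \<or> degree h + 2 * i = degree p" by auto
  have ik: "i < k" using Suc by simp
  obtain a b where ab: "a \<noteq> b" "poly (qs i) a = 0" "poly (qs i) b = 0" "poly p a = 0" "poly p b = 0"
    "\<And>j. j < k \<Longrightarrow> j \<noteq> i \<Longrightarrow> poly (qs j) a \<noteq> 0 \<and> poly (qs j) b \<noteq> 0"
    using roots[OF ik] by blast
  have pa: "poly (\<Prod>j<i. qs j) a \<noteq> 0" "poly (\<Prod>j<i. qs j) b \<noteq> 0"
    using ab(6) ik by (auto simp: poly_prod prod_zero_iff)
  have "poly h a = 0" "poly h b = 0" using ab(4,5) pa h(1) by (metis mult_eq_0_iff poly_mult)+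
  then have "qs i dvd h" using quad_dvd[OF deg[OF ik] ab(2,3,1)] by blast
  then obtain h' where h': "h = qs i * h'" by (auto elim: dvdE)
  have "p = (\<Prod>j<Suc i. qs j) * h'" using h(1) h' by (simp add: algebra_simps)
  moreover have "h' = 0 \<or> degree h' + 2 * Suc i = degree p"
  proof (cases "h' = 0")
    case False
    have "qs i \<noteq> 0" using deg[OF ik] by auto
    then have "degree h = 2 + degree h'" using h' False deg[OF ik] by (simp add: degree_mult_eq)
    moreover have "h \<noteq> 0" using h' False \<open>qs i \<noteq> 0\<close> by simp
    ultimately show ?thesis using h(2) by simp
  qed simp
  ultimately show ?case by blast
qed

lemma is_poly2_prod: "finite S \<Longrightarrow> (\<And>i. i \<in> S \<Longrightarrow> is_poly2 2 (f i)) \<Longrightarrow> is_poly2 (2 * card S) (\<lambda>x. \<Prod>i\<in>S. f i x)"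
proof (induction S rule: finite_induct)
  case empty then show ?case by (simp add: is_poly2_const)
next
  case (insert a F)
  have "is_poly2 (2 + 2 * card F) (\<lambda>x. f a x * (\<Prod>i\<in>F. f i x))"
    using insert by (intro is_poly2_mult) auto
  then show ?case using insert by simp
qed

lemma cdeg_diff: "cdeg r n c f \<Longrightarrow> cdeg r n c g \<Longrightarrow> cdeg r n c (\<lambda>x. f x - g x)"
  using cdeg_add[of r n c f "\<lambda>x. (-1) * g x"] cdeg_mult[OF cdeg_const[of r 0 c "-1"], of n g] by simp

lemma is_poly2_continuous: "is_poly2 n P \<Longrightarrow> continuous_on S P"
  unfolding is_poly2_def poly2_def
proof (elim exE)
  fix c assume "\<forall>x. P x = (\<Sum>i\<le>n. \<Sum>j\<le>n - i. c i j * fst x ^ i * snd x ^ j)"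
  then have "P = (\<lambda>x. \<Sum>i\<le>n. \<Sum>j\<le>n - i. c i j * fst x ^ i * snd x ^ j)" by auto
  then show "continuous_on S P" by (simp add: continuous_intros)
qed

lemma curve_deriv:
  assumes curve: "arclength_simple_closed_curve \<gamma> L"
  shows "(\<gamma> has_vector_derivative vector_derivative \<gamma> (at s)) (at s)"
    and "norm (vector_derivative \<gamma> (at s)) = 1"
proof -
  have "Ck_on (Suc 0) UNIV \<gamma>" using curve unfolding arclength_simple_closed_curve_def smooth_on_def by blast
  then have "\<gamma> differentiable_on UNIV" by simp
  then have "\<gamma> differentiable (at s)" unfolding differentiable_on_def by simp
  then show "(\<gamma> has_vector_derivative vector_derivative \<gamma> (at s)) (at s)"
    by (simp add: vector_derivative_works)
  show "norm (vector_derivative \<gamma> (at s)) = 1" using curve unfolding arclength_simple_closed_curve_def by blast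
qed

lemma curve_cont:
  assumes curve: "arclength_simple_closed_curve \<gamma> L"
  shows "continuous_on S \<gamma>"
proof -
  have "\<And>s. isCont \<gamma> s" using curve_deriv[OF curve]
    by (meson has_vector_derivative_continuous)
  then show ?thesis by (simp add: continuous_at_imp_continuous_on)
qed

lemma curve_lipschitz:
  assumes curve: "arclength_simple_closed_curve \<gamma> L"
  shows "dist (\<gamma> a) (\<gamma> b) \<le> \<bar>a - b\<bar>"
proof -
  have "norm (\<gamma> a - \<gamma> b) \<le> 1 * norm (a - b)"
  proof (rule differentiable_bound[of UNIV \<gamma> "\<lambda>x h. h *\<^sub>R vector_derivative \<gamma> (at x)"])
    show "\<And>x. x \<in> UNIV \<Longrightarrow> (\<gamma> has_derivative (\<lambda>h. h *\<^sub>R vector_derivative \<gamma> (at x))) (at x within UNIV)"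
      using curve_deriv(1)[OF curve] by (simp add: has_vector_derivative_def)
    show "\<And>x. x \<in> UNIV \<Longrightarrow> onorm (\<lambda>h. h *\<^sub>R vector_derivative \<gamma> (at x)) \<le> 1"
      by (rule onorm_le) (simp add: curve_deriv(2)[OF curve])
  qed auto
  then show ?thesis by (simp add: dist_norm)
qed

lemma curve_periodic_nat:
  assumes curve: "arclength_simple_closed_curve \<gamma> L"
  shows "\<gamma> (s + real n * L) = \<gamma> s"
proof (induction n)
  case (Suc n)
  have "\<gamma> (s + real (Suc n) * L) = \<gamma> ((s + real n * L) + L)" by (simp add: algebra_simps)
  also have "\<dots> = \<gamma> (s + real n * L)" using curve unfolding arclength_simple_closed_curve_def by blast
  finally show ?case using Suc by simp
qed simp

lemma curve_periodic:
  assumes curve: "arclength_simple_closed_curve \<gamma> L"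
  shows "\<gamma> (s + of_int k * L) = \<gamma> s"
proof (cases "k \<ge> 0")
  case True
  then show ?thesis using curve_periodic_nat[OF curve, of s "nat k"] by simp
next
  case False
  have "\<gamma> ((s + of_int k * L) + real (nat (-k)) * L) = \<gamma> (s + of_int k * L)"
    by (rule curve_periodic_nat[OF curve])
  then show ?thesis using False by simp
qed

lemma curve_normal_periodic:
  assumes curve: "arclength_simple_closed_curve \<gamma> L"
  shows "unit_normal \<gamma> (s + of_int k * L) = unit_normal \<gamma> s"
proof -
  have eq: "\<gamma> \<circ> (\<lambda>t. t + of_int k * L) = \<gamma>" using curve_periodic[OF curve] by (auto simp: fun_eq_iff)
  have "((\<gamma> \<circ> (\<lambda>t. t + of_int k * L)) has_vector_derivative (1 *\<^sub>R vector_derivative \<gamma> (at (s + of_int k * L)))) (at s)"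
    by (rule vector_diff_chain_at) (auto intro!: derivative_eq_intros curve_deriv(1)[OF curve])
  then have "(\<gamma> has_vector_derivative vector_derivative \<gamma> (at (s + of_int k * L))) (at s)" using eq by simp
  then have "vector_derivative \<gamma> (at s) = vector_derivative \<gamma> (at (s + of_int k * L))"
    by (rule vector_derivative_at)
  then show ?thesis unfolding unit_normal_def unit_tangent_def by simp
qed

lemma reduce_period:
  fixes L s :: real
  assumes "L > 0"
  shows "\<exists>s' k. s' \<in> {0..<L} \<and> s = s' + of_int k * L"
proof -
  define k where "k = \<lfloor>s / L\<rfloor>"
  have "of_int k \<le> s / L" "s / L < of_int k + 1" unfolding k_def by linarith+
  then have "of_int k * L \<le> s" "s < (of_int k + 1) * L" using assms by (auto simp: field_simps)
  then show ?thesis by (intro exI[of _ "s - of_int k * L"] exI[of _ k]) (auto simp: algebra_simps)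
qed

lemma no_int_between: "0 < (of_int k :: real) * L \<Longrightarrow> of_int k * L < L \<Longrightarrow> L > 0 \<Longrightarrow> False"
proof -
  assume a: "0 < (of_int k :: real) * L" "of_int k * L < L" "L > 0"
  then have "0 < (of_int k :: real)" "(of_int k :: real) < 1" by (auto simp: zero_less_mult_iff mult_less_cancel_right2)
  then have "0 < k" "k < 1" by simp_all
  then show False by linarith
qed

lemma curve_inj_local:
  assumes curve: "arclength_simple_closed_curve \<gamma> L"
    and "a \<noteq> b" "\<bar>a - b\<bar> < L"
  shows "\<gamma> a \<noteq> \<gamma> b"
proof
  assume eq: "\<gamma> a = \<gamma> b"
  have L: "L > 0" using curve unfolding arclength_simple_closed_curve_def by blast
  obtain a' k where a': "a' \<in> {0..<L}" "a = a' + of_int k * L" using reduce_period[OF L] by blast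
  obtain b' l where b': "b' \<in> {0..<L}" "b = b' + of_int l * L" using reduce_period[OF L] by blast
  have inj: "inj_on \<gamma> {0..<L}" using curve unfolding arclength_simple_closed_curve_def by blast
  have "\<gamma> a' = \<gamma> b'" using eq curve_periodic[OF curve] a' b' by metis
  then have "a' = b'" using inj a' b' by (auto dest: inj_onD)
  then have "a - b = of_int (k - l) * L" using a' b' by (simp add: algebra_simps)
  then have "b - a = of_int (l - k) * L" by (simp add: algebra_simps)
  show False
  proof (cases "a < b")
    case True
    then show False using \<open>b - a = of_int (l - k) * L\<close> assms(3) L no_int_between[of "l - k" L] by simp
  next
    case False
    then show False using \<open>a - b = of_int (k - l) * L\<close> assms(2,3) L no_int_between[of "k - l" L] by simp
  qed
qed

lemma rolle_point:
  assumes curve: "arclength_simple_closed_curve \<gamma> L"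
    and ab: "a < b" "dist x (\<gamma> a) = r" "dist x (\<gamma> b) = r"
  shows "\<exists>z. a < z \<and> z < b \<and> inner (x - \<gamma> z) (vector_derivative \<gamma> (at z)) = 0"
proof -
  define T where "T t = vector_derivative \<gamma> (at t)" for t
  define g where "g t = inner (x - \<gamma> t) (x - \<gamma> t)" for t
  have dg: "(g has_derivative (\<lambda>h. inner (x - \<gamma> t) (0 - h *\<^sub>R T t) + inner (0 - h *\<^sub>R T t) (x - \<gamma> t))) (at t)" for t
  proof -
    have d\<gamma>: "(\<gamma> has_derivative (\<lambda>h. h *\<^sub>R T t)) (at t)"
      using curve_deriv(1)[OF curve, of t] unfolding T_def has_vector_derivative_def .
    have dv: "((\<lambda>t. x - \<gamma> t) has_derivative (\<lambda>h. 0 - h *\<^sub>R T t)) (at t)"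
      by (intro has_derivative_diff has_derivative_const d\<gamma>)
    show ?thesis unfolding g_def[abs_def] by (rule has_derivative_inner[OF dv dv])
  qed
  have gab: "g a = g b" using ab unfolding g_def by (simp add: dist_norm power2_norm_eq_inner[symmetric])
  have cont: "continuous_on {a..b} g"
    using dg by (intro continuous_at_imp_continuous_on) (blast intro: has_derivative_continuous)
  obtain z where z: "a < z" "z < b" "DERIV g z :> 0"
    using Rolle[OF ab(1) gab cont] dg unfolding differentiable_def by blast
  have e0: "(*) (0::real) = (\<lambda>h. 0)" by auto
  have "(g has_derivative (\<lambda>h. 0)) (at z)" using z(3) unfolding has_field_derivative_def e0 .
  then have "(\<lambda>h. inner (x - \<gamma> z) (0 - h *\<^sub>R T z) + inner (0 - h *\<^sub>R T z) (x - \<gamma> z)) = (\<lambda>h. 0)"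
    using dg by (intro has_derivative_unique) auto
  then have "inner (x - \<gamma> z) (0 - 1 *\<^sub>R T z) + inner (0 - 1 *\<^sub>R T z) (x - \<gamma> z) = 0"
    by (rule fun_cong)
  then have "inner (x - \<gamma> z) (T z) = 0" by (simp add: inner_commute)
  then show ?thesis using z unfolding T_def by blast
qed

lemma normal_decomp:
  fixes v T :: "real \<times> real"
  assumes "norm T = 1" "inner v T = 0"
  shows "v = inner v (- snd T, fst T) *\<^sub>R (- snd T, fst T)" "\<bar>inner v (- snd T, fst T)\<bar> = norm v"
proof -
  obtain v1 v2 where v: "v = (v1, v2)" by (cases v)
  obtain T1 T2 where T: "T = (T1, T2)" by (cases T)
  have n: "T1^2 + T2^2 = 1" using assms(1) unfolding T by (simp add: norm_Pair)
  have i: "v1 * T1 + v2 * T2 = 0" using assms(2) unfolding v T by (simp add: inner_Pair)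
  have e1: "v1 = (v1 * (- T2) + v2 * T1) * (- T2)" using n i by algebra
  have e2: "v2 = (v1 * (- T2) + v2 * T1) * T1" using n i by algebra
  show "v = inner v (- snd T, fst T) *\<^sub>R (- snd T, fst T)"
    unfolding v T using e1 e2 by (simp add: inner_Pair)
  have "norm v = norm (inner v (- snd T, fst T) *\<^sub>R (- snd T, fst T))"
    using \<open>v = inner v (- snd T, fst T) *\<^sub>R (- snd T, fst T)\<close> by simp
  also have "\<dots> = \<bar>inner v (- snd T, fst T)\<bar>"
  proof -
    have "(inner v (- T2, T1) * T2)^2 + (inner v (- T2, T1) * T1)^2 = (inner v (- T2, T1))^2" using n by algebra
    then show ?thesis unfolding T by (simp add: norm_Pair)
  qed
  finally show "\<bar>inner v (- snd T, fst T)\<bar> = norm v" by simp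
qed

lemma three_circles_sorted:
  assumes curve: "arclength_simple_closed_curve \<gamma> L"
    and tub: "tubular_radius \<gamma> L \<rho>"
    and s: "s1 < s2" "s2 < s3" "s3 - s1 < L" "r + (s3 - s1) < \<rho>"
    and x: "dist x (\<gamma> s1) = r" "dist x (\<gamma> s2) = r" "dist x (\<gamma> s3) = r"
  shows False
proof -
  have L: "L > 0" using curve unfolding arclength_simple_closed_curve_def by blast
  have normal: "\<exists>t. \<bar>t\<bar> < \<rho> \<and> x = \<gamma> z + t *\<^sub>R unit_normal \<gamma> z"
    if z: "s1 < z" "z < s3" "inner (x - \<gamma> z) (vector_derivative \<gamma> (at z)) = 0" for z
  proof -
    define t where "t = inner (x - \<gamma> z) (unit_normal \<gamma> z)"
    have un: "unit_normal \<gamma> z = (- snd (vector_derivative \<gamma> (at z)), fst (vector_derivative \<gamma> (at z)))"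
      unfolding unit_normal_def unit_tangent_def ..
    note nd = normal_decomp[OF curve_deriv(2)[OF curve] z(3)]
    have "x - \<gamma> z = t *\<^sub>R unit_normal \<gamma> z" using nd(1) unfolding t_def un .
    moreover have "\<bar>t\<bar> = dist x (\<gamma> z)" using nd(2) unfolding t_def un by (simp add: dist_norm)
    moreover have "dist x (\<gamma> z) \<le> dist x (\<gamma> s1) + dist (\<gamma> s1) (\<gamma> z)" by (rule dist_triangle)
    moreover have "dist (\<gamma> s1) (\<gamma> z) \<le> \<bar>s1 - z\<bar>" by (rule curve_lipschitz[OF curve])
    ultimately show ?thesis using z s x by (intro exI[of _ t]) (auto simp: algebra_simps)
  qed
  obtain z1 where z1: "s1 < z1" "z1 < s2" "inner (x - \<gamma> z1) (vector_derivative \<gamma> (at z1)) = 0"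
    using rolle_point[OF curve s(1) x(1,2)] by blast
  obtain z2 where z2: "s2 < z2" "z2 < s3" "inner (x - \<gamma> z2) (vector_derivative \<gamma> (at z2)) = 0"
    using rolle_point[OF curve s(2) x(2,3)] by blast
  have "z1 < s3" "s1 < z2" using z1 z2 s by auto
  obtain t1 where t1: "\<bar>t1\<bar> < \<rho>" "x = \<gamma> z1 + t1 *\<^sub>R unit_normal \<gamma> z1" using normal[OF z1(1) \<open>z1 < s3\<close> z1(3)] by blast
  obtain t2 where t2: "\<bar>t2\<bar> < \<rho>" "x = \<gamma> z2 + t2 *\<^sub>R unit_normal \<gamma> z2" using normal[OF \<open>s1 < z2\<close> z2(2) z2(3)] by blast
  obtain a k where a: "a \<in> {0..<L}" "z1 = a + of_int k * L" using reduce_period[OF L] by blast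
  obtain b l where b: "b \<in> {0..<L}" "z2 = b + of_int l * L" using reduce_period[OF L] by blast
  have inj: "inj_on (\<lambda>(s, t). \<gamma> s + t *\<^sub>R unit_normal \<gamma> s) ({0..<L} \<times> {-\<rho><..<\<rho>})"
    using tub unfolding tubular_radius_def by blast
  have "\<gamma> a + t1 *\<^sub>R unit_normal \<gamma> a = x"
    using t1(2) a(2) curve_periodic[OF curve] curve_normal_periodic[OF curve] by metis
  moreover have "\<gamma> b + t2 *\<^sub>R unit_normal \<gamma> b = x"
    using t2(2) b(2) curve_periodic[OF curve] curve_normal_periodic[OF curve] by metis
  ultimately have "(a, t1) = (b, t2)"
    using inj a(1) b(1) t1(1) t2(1) by (auto dest!: inj_onD[where x="(a,t1)" and y="(b,t2)"])
  then have "z2 - z1 = of_int (l - k) * L" using a b by (simp add: algebra_simps)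
  moreover have "0 < z2 - z1" "z2 - z1 < L" using z1 z2 s by auto
  ultimately show False using no_int_between[of "l - k" L] L by simp
qed

lemma three_circles:
  assumes curve: "arclength_simple_closed_curve \<gamma> L"
    and tub: "tubular_radius \<gamma> L \<rho>"
    and s: "s1 \<noteq> s2" "s2 \<noteq> s3" "s1 \<noteq> s3"
    and I: "\<And>s. s \<in> {s1,s2,s3} \<Longrightarrow> \<bar>s - s0\<bar> \<le> e" "2 * e < L" "r + 2 * e < \<rho>"
    and x: "dist x (\<gamma> s1) = r" "dist x (\<gamma> s2) = r" "dist x (\<gamma> s3) = r"
  shows False
proof -
  have b: "\<bar>s1 - s0\<bar> \<le> e" "\<bar>s2 - s0\<bar> \<le> e" "\<bar>s3 - s0\<bar> \<le> e" using I(1) by auto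
  have T: "False" if "p < q" "q < u" "dist x (\<gamma> p) = r" "dist x (\<gamma> q) = r" "dist x (\<gamma> u) = r"
      "\<bar>p - s0\<bar> \<le> e" "\<bar>u - s0\<bar> \<le> e" for p q u
    by (rule three_circles_sorted[OF curve tub that(1,2) _ _ that(3-5)]) (use that I(2,3) in auto)
  show False
    using s b x
    by (cases "s1 < s2"; cases "s2 < s3"; cases "s1 < s3") (metis T linorder_neqE_linordered_idom)+
qed

lemma Re_ofreal_mult: "Re (complex_of_real a * z) = a * Re z"
  by simp

theorem lemma6p1:
  fixes \<gamma> :: "real \<Rightarrow> real \<times> real" and L r s0 :: real
  assumes curve: "arclength_simple_closed_curve \<gamma> L"
    and r_pos: "r > 0"
    and r_small: "\<exists>\<rho>. tubular_radius \<gamma> L \<rho> \<and> 2 * r < \<rho>"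
  shows "\<exists>\<epsilon>0>0. \<forall>\<epsilon>. 0 < \<epsilon> \<and> \<epsilon> < \<epsilon>0 \<longrightarrow>
    (\<forall>(F :: real \<times> real \<Rightarrow> real) (N :: nat).
       smooth_on_set (Aset \<gamma> r s0 \<epsilon>) F \<and>
       (\<forall>s. \<bar>s - s0\<bar> < \<epsilon> \<longrightarrow>
          (\<exists>Fs. is_poly2 N Fs \<and> (\<forall>x\<in>circ \<gamma> r s. F x = Fs x)))
       \<longrightarrow> (\<exists>P. is_poly2 (2 * N) P \<and> (\<forall>x\<in>Aset \<gamma> r s0 \<epsilon>. F x = P x)))"
proof -
  obtain \<rho> where tub: "tubular_radius \<gamma> L \<rho>" and \<rho>: "2 * r < \<rho>" using r_small by blast
  have L: "L > 0" using curve unfolding arclength_simple_closed_curve_def by blast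
  define \<epsilon>0 where "\<epsilon>0 = min (L/4) (r/2)"
  show ?thesis
  proof (intro exI[of _ \<epsilon>0] conjI allI impI)
    show "\<epsilon>0 > 0" unfolding \<epsilon>0_def using L r_pos by simp
    fix \<epsilon> F and N :: nat
    assume \<epsilon>: "0 < \<epsilon> \<and> \<epsilon> < \<epsilon>0"
    assume "smooth_on_set (Aset \<gamma> r s0 \<epsilon>) F \<and>
       (\<forall>s. \<bar>s - s0\<bar> < \<epsilon> \<longrightarrow> (\<exists>Fs. is_poly2 N Fs \<and> (\<forall>x\<in>circ \<gamma> r s. F x = Fs x)))"
    then have sm: "smooth_on_set (Aset \<gamma> r s0 \<epsilon>) F"
      and hyp: "\<And>s. \<bar>s - s0\<bar> < \<epsilon> \<Longrightarrow> \<exists>Fs. is_poly2 N Fs \<and> (\<forall>x. dist x (\<gamma> s) = r \<longrightarrow> F x = Fs x)"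
      unfolding circ_def by auto
    have e1: "2 * \<epsilon> < L" and e2: "r + 2 * \<epsilon> < \<rho>" and e3: "2 * \<epsilon> < r"
      using \<epsilon> \<rho> unfolding \<epsilon>0_def by auto
    have three: False if "s1 \<noteq> s2" "s2 \<noteq> s3" "s1 \<noteq> s3" "\<bar>s1 - s0\<bar> \<le> \<epsilon>" "\<bar>s2 - s0\<bar> \<le> \<epsilon>" "\<bar>s3 - s0\<bar> \<le> \<epsilon>"
      "dist x (\<gamma> s1) = r" "dist x (\<gamma> s2) = r" "dist x (\<gamma> s3) = r" for s1 s2 s3 x
    proof (rule three_circles[OF curve tub that(1-3)])
      show "\<And>s. s \<in> {s1,s2,s3} \<Longrightarrow> \<bar>s - s0\<bar> \<le> \<epsilon>" using that by auto
      show "2 * \<epsilon> < L" by (rule e1)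
      show "r + 2 * \<epsilon> < \<rho>" by (rule e2)
      show "dist x (\<gamma> s1) = r" "dist x (\<gamma> s2) = r" "dist x (\<gamma> s3) = r" using that by auto
    qed
    have cdist: "0 < dist (\<gamma> s) (\<gamma> s') \<and> dist (\<gamma> s) (\<gamma> s') < 2 * r"
      if "\<bar>s - s0\<bar> \<le> \<epsilon>" "\<bar>s' - s0\<bar> \<le> \<epsilon>" "s \<noteq> s'" for s s'
    proof
      have "\<bar>s - s'\<bar> < L" using that e1 by auto
      then show "0 < dist (\<gamma> s) (\<gamma> s')" using curve_inj_local[OF curve that(3)] by simp
      have "dist (\<gamma> s) (\<gamma> s') \<le> \<bar>s - s'\<bar>" by (rule curve_lipschitz[OF curve])
      then show "dist (\<gamma> s) (\<gamma> s') < 2 * r" using that e3 by auto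
    qed
    define a where "a j = s0 + \<epsilon> * real j / (2 * real N + 2)" for j
    have a_in: "\<bar>a j - s0\<bar> < \<epsilon>" if "j \<le> N" for j
    proof -
      have "real j / (2 * real N + 2) < 1" using that by (simp add: divide_less_eq)
      then have "\<epsilon> * (real j / (2 * real N + 2)) < \<epsilon> * 1" using \<epsilon> by (intro mult_strict_left_mono) auto
      moreover have "0 \<le> \<epsilon> * real j / (2 * real N + 2)" using \<epsilon> by simp
      ultimately show ?thesis unfolding a_def by simp
    qed
    have a_inj: "a i = a j \<Longrightarrow> i = j" for i j
      using \<epsilon> unfolding a_def by (simp add: divide_right_mono_neg)
    define c where "c j = \<gamma> (a j)" for j
    have "\<forall>j. \<exists>Fs. j \<le> N \<longrightarrow> is_poly2 N Fs \<and> (\<forall>x. dist x (c j) = r \<longrightarrow> F x = Fs x)"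
      using hyp a_in unfolding c_def by blast
    then obtain Fp where Fp: "\<And>j. j \<le> N \<Longrightarrow> is_poly2 N (Fp j)"
      "\<And>j x. j \<le> N \<Longrightarrow> dist x (c j) = r \<Longrightarrow> F x = Fp j x"
      by metis
    have main: "\<exists>P. is_poly2 (2*N) P \<and> (\<forall>c'. cdeg r N c' P) \<and> (\<forall>j<k. \<forall>x. dist x (c j) = r \<longrightarrow> F x = P x)"
      if "k \<le> N + 1" for k
      using that
    proof (induction k)
      case 0
      then show ?case by (intro exI[of _ "\<lambda>x. 0"]) (auto intro: is_poly2_const cdeg_const)
    next
      case (Suc k)
      then have kN: "k \<le> N" by simp
      obtain P where P: "is_poly2 (2*N) P" "\<And>c'. cdeg r N c' P" "\<And>j x. j < k \<Longrightarrow> dist x (c j) = r \<Longrightarrow> F x = P x"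
        using Suc by auto
      define g where "g x = Fp k x - P x" for x
      have "cdeg r N (c k) g" unfolding g_def[abs_def]
        by (intro cdeg_diff cdeg_of_poly2 Fp(1) kN P(2))
      then obtain p where p: "degree p \<le> 2*N"
        "\<And>w. cmod w = 1 \<Longrightarrow> complex_of_real (g (pt r (c k) w)) * w^N = poly p w"
        unfolding cdeg_def by blast
      define qs where "qs j = qpoly r (c k) (c j)" for j
      have zero_on: "g x = 0" if "dist x (c k) = r" "dist x (c j) = r" "j < k" for x j
        using P(3)[OF that(3,2)] Fp(2)[OF kN that(1)] unfolding g_def by simp
      have notq: "poly (qs i) w \<noteq> 0"
        if "cmod w = 1" "dist (pt r (c k) w) (c j) = r" "i < k" "j < k" "i \<noteq> j" for w i j
      proof
        assume "poly (qs i) w = 0"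
        then have "complex_of_real (qf r (c i) (pt r (c k) w)) * w = 0" unfolding qs_def qpoly_eval[OF that(1)] .
        moreover have "w \<noteq> 0" using that(1) by auto
        ultimately have "qf r (c i) (pt r (c k) w) = 0" by simp
        then have di: "dist (pt r (c k) w) (c i) = r" using qf_zero_iff[OF r_pos] by simp
        have dk: "dist (pt r (c k) w) (c k) = r" using dist_pt[OF r_pos] that(1) by simp
        have "a i \<noteq> a j" "a j \<noteq> a k" "a i \<noteq> a k" using a_inj that(3-5) by blast+
        then show False
          using three[of "a i" "a j" "a k" "pt r (c k) w"] a_in[of i] a_in[of j] a_in[of k] that(2-4) kN di dk
          unfolding c_def by auto
      qed
      have "\<exists>h. p = (\<Prod>j<k. qs j) * h \<and> (h = 0 \<or> degree h + 2 * k = degree p)"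
      proof (rule div_loop[of k qs p k])
        fix j assume j: "j < k"
        have ajk: "a j \<noteq> a k" using a_inj j by blast
        have cd: "0 < dist (c k) (c j) \<and> dist (c k) (c j) < 2 * r"
          unfolding c_def using cdist[of "a k" "a j"] a_in[of j] a_in[of k] j kN ajk by auto
        then show "degree (qs j) = 2" unfolding qs_def using qpoly_degree[OF r_pos] by auto
        obtain w1 w2 where w: "w1 \<noteq> w2" "cmod w1 = 1" "cmod w2 = 1" "dist (pt r (c k) w1) (c j) = r"
            "dist (pt r (c k) w2) (c j) = r"
          using two_intersections[OF r_pos, of "c k" "c j"] cd by blast
        have root: "poly (qs j) w = 0 \<and> poly p w = 0" if "cmod w = 1" "dist (pt r (c k) w) (c j) = r" for w
        proof
          have "qf r (c j) (pt r (c k) w) = 0" using that(2) qf_zero_iff[OF r_pos] by simp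
          then show "poly (qs j) w = 0" unfolding qs_def qpoly_eval[OF that(1), symmetric] by simp
          have dk: "dist (pt r (c k) w) (c k) = r" using dist_pt[OF r_pos] that(1) by simp
          show "poly p w = 0" using p(2)[OF that(1)] zero_on[OF dk that(2) j] by simp
        qed
        show "\<exists>a b. a \<noteq> b \<and> poly (qs j) a = 0 \<and> poly (qs j) b = 0 \<and> poly p a = 0 \<and> poly p b = 0 \<and>
            (\<forall>i<k. i \<noteq> j \<longrightarrow> poly (qs i) a \<noteq> 0 \<and> poly (qs i) b \<noteq> 0)"
          using w root[OF w(2,4)] root[OF w(3,5)] notq[OF w(2,4) _ j] notq[OF w(3,5) _ j] by blast
      qed simp
      then obtain h where h: "p = (\<Prod>j<k. qs j) * h" "h = 0 \<or> degree h + 2 * k = degree p" by blast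
      have dh: "degree h \<le> 2 * (N - k)" using h(2) p(1) kN by auto
      obtain R where R: "is_poly2 (N - k) R" "\<And>w. cmod w = 1 \<Longrightarrow> R (pt r (c k) w) = Re (poly h w / w^(N-k))"
        using extend_poly2[OF r_pos dh, of "c k"] by blast
      define P' where "P' x = P x + (\<Prod>j<k. qf r (c j) x) * R x" for x
      have "is_poly2 (2 * card {..<k} + (N - k)) (\<lambda>x. (\<Prod>j<k. qf r (c j) x) * R x)"
        by (intro is_poly2_mult is_poly2_prod R(1) is_poly2_qf) auto
      then have "is_poly2 (2*N) (\<lambda>x. (\<Prod>j<k. qf r (c j) x) * R x)"
        by (rule is_poly2_mono) (use kN in simp)
      then have polyP': "is_poly2 (2*N) P'" unfolding P'_def[abs_def] by (intro is_poly2_add P(1))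
      have cdegP': "cdeg r N c' P'" for c'
      proof -
        have "cdeg r (card {..<k} + (N - k)) c' (\<lambda>x. (\<Prod>j<k. qf r (c j) x) * R x)"
          by (intro cdeg_mult cdeg_prod cdeg_qf cdeg_of_poly2 R(1)) auto
        then have "cdeg r N c' (\<lambda>x. (\<Prod>j<k. qf r (c j) x) * R x)" using kN by simp
        then show ?thesis unfolding P'_def[abs_def] by (intro cdeg_add P(2))
      qed
      have agree: "F x = P' x" if j: "j < Suc k" and x: "dist x (c j) = r" for j x
      proof (cases "j < k")
        case True
        have "qf r (c j) x = 0" using x qf_zero_iff[OF r_pos] by simp
        then have "(\<Prod>j<k. qf r (c j) x) = 0" using True by (intro prod_zero) auto
        then show ?thesis unfolding P'_def using P(3)[OF True x] by simp
      next
        case False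
        then have jk: "j = k" using j by simp
        obtain w where w: "cmod w = 1" "x = pt r (c k) w" using on_circle_pt[OF r_pos] x jk by blast
        have w0: "w \<noteq> 0" using w(1) by auto
        have "complex_of_real (g x) * w^N = poly p w" using p(2)[OF w(1)] w(2) by simp
        also have "\<dots> = (\<Prod>j<k. poly (qs j) w) * poly h w" unfolding h(1) by (simp add: poly_prod)
        also have "\<dots> = (\<Prod>j<k. complex_of_real (qf r (c j) x) * w) * poly h w"
          unfolding qs_def qpoly_eval[OF w(1), symmetric] w(2) ..
        also have "\<dots> = complex_of_real (\<Prod>j<k. qf r (c j) x) * w^k * poly h w"
          by (simp add: prod.distrib)
        finally have A: "complex_of_real (g x) * w^N = complex_of_real (\<Prod>j<k. qf r (c j) x) * w^k * poly h w" .
        have eqN: "w^N = w^(N-k) * w^k" using kN by (simp add: power_add[symmetric])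
        have "(complex_of_real (g x) * w^(N-k)) * w^k = (complex_of_real (\<Prod>j<k. qf r (c j) x) * poly h w) * w^k"
          using A unfolding eqN by (simp add: mult_ac)
        then have "complex_of_real (g x) * w^(N-k) = complex_of_real (\<Prod>j<k. qf r (c j) x) * poly h w"
          using mult_right_cancel[of "w^k"] w0 by simp
        then have "complex_of_real (g x) = complex_of_real (\<Prod>j<k. qf r (c j) x) * (poly h w / w^(N-k))"
          using w0 by (simp add: field_simps)
        then have "Re (complex_of_real (g x)) = Re (complex_of_real (\<Prod>j<k. qf r (c j) x) * (poly h w / w^(N-k)))"
          by (rule arg_cong)
        then have "g x = (\<Prod>j<k. qf r (c j) x) * Re (poly h w / w^(N-k))"
          by (simp only: Re_complex_of_real Re_ofreal_mult)
        then have "g x = (\<Prod>j<k. qf r (c j) x) * R x" using R(2)[OF w(1)] w(2) by simp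
        then show ?thesis using Fp(2)[OF kN, of x] x jk unfolding P'_def g_def by simp
      qed
      show ?case using polyP' cdegP' agree by blast
    qed
    from main[of "N+1"] obtain P where P0: "is_poly2 (2*N) P" "\<forall>c'. cdeg r N c' P"
      "\<forall>j<N+1. \<forall>x. dist x (c j) = r \<longrightarrow> F x = P x" by auto
    have P3: "F x = P x" if "j \<le> N" "dist x (c j) = r" for j x
    proof -
      have "j < N + 1" using that(1) by simp
      then show ?thesis using P0(3) that(2) by blast
    qed
    have P: "is_poly2 (2*N) P" "\<And>c'. cdeg r N c' P" "\<And>j x. j \<le> N \<Longrightarrow> dist x (c j) = r \<Longrightarrow> F x = P x"
      using P0(1) P0(2) P3 by blast+
    have interior: "F x = P x" if s: "\<bar>s - s0\<bar> < \<epsilon>" and x: "dist x (\<gamma> s) = r" for s x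
    proof (cases "\<exists>j\<le>N. s = a j")
      case True
      then obtain j where "j \<le> N" "s = a j" by blast
      then show ?thesis using P(3) x unfolding c_def by auto
    next
      case False
      obtain Fs where Fs: "is_poly2 N Fs" "\<And>x. dist x (\<gamma> s) = r \<Longrightarrow> F x = Fs x" using hyp[OF s] by blast
      define f where "f x = Fs x - P x" for x
      have cf: "cdeg r N (\<gamma> s) f" unfolding f_def[abs_def] by (intro cdeg_diff cdeg_of_poly2 Fs(1) P(2))
      have "\<forall>j. j \<le> N \<longrightarrow> (\<exists>w1 w2. w1 \<noteq> w2 \<and> cmod w1 = 1 \<and> cmod w2 = 1 \<and> dist (pt r (\<gamma> s) w1) (c j) = r \<and> dist (pt r (\<gamma> s) w2) (c j) = r)"
      proof (intro allI impI)
        fix j assume j: "j \<le> N"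
        have "s \<noteq> a j" using False j by blast
        then have "0 < dist (\<gamma> s) (c j) \<and> dist (\<gamma> s) (c j) < 2 * r"
          unfolding c_def using cdist[of s "a j"] a_in[OF j] s by auto
        then show "\<exists>w1 w2. w1 \<noteq> w2 \<and> cmod w1 = 1 \<and> cmod w2 = 1 \<and> dist (pt r (\<gamma> s) w1) (c j) = r \<and> dist (pt r (\<gamma> s) w2) (c j) = r"
          using two_intersections[OF r_pos, of "\<gamma> s" "c j"] by blast
      qed
      then obtain W1 W2 where W: "\<And>j. j \<le> N \<Longrightarrow> W1 j \<noteq> W2 j \<and> cmod (W1 j) = 1 \<and> cmod (W2 j) = 1 \<and>
          dist (pt r (\<gamma> s) (W1 j)) (c j) = r \<and> dist (pt r (\<gamma> s) (W2 j)) (c j) = r"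
        by metis
      define Wf where "Wf = (\<lambda>(j, b::bool). if b then W1 j else W2 j)"
      define W where "W = Wf ` ({..N} \<times> UNIV)"
      have Wprop: "cmod (Wf jb) = 1 \<and> dist (pt r (\<gamma> s) (Wf jb)) (c (fst jb)) = r" if "jb \<in> {..N} \<times> UNIV" for jb
        using W[of "fst jb"] that unfolding Wf_def by (auto split: prod.splits)
      have inj: "inj_on Wf ({..N} \<times> UNIV)"
      proof (rule inj_onI)
        fix u v assume u: "u \<in> {..N} \<times> (UNIV :: bool set)" and v: "v \<in> {..N} \<times> (UNIV :: bool set)" and e: "Wf u = Wf v"
        have "fst u = fst v"
        proof (rule ccontr)
          assume ne: "fst u \<noteq> fst v"
          have su: "s \<noteq> a (fst u)" "s \<noteq> a (fst v)" using False u v by auto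
          have "a (fst u) \<noteq> a (fst v)" using a_inj ne by blast
          moreover have "dist (pt r (\<gamma> s) (Wf u)) (\<gamma> s) = r" using dist_pt[OF r_pos] Wprop[OF u] by simp
          ultimately show False
            using three[of s "a (fst u)" "a (fst v)" "pt r (\<gamma> s) (Wf u)"] su s a_in[of "fst u"] a_in[of "fst v"]
              Wprop[OF u] Wprop[OF v] e u v unfolding c_def by auto
        qed
        then show "u = v" using e W[of "fst u"] u v unfolding Wf_def
          by (cases u; cases v) (auto split: if_splits)
      qed
      have cardW: "card W = 2 * (N + 1)" unfolding W_def card_image[OF inj] by (simp add: card_cartesian_product)
      obtain w where w: "cmod w = 1" "x = pt r (\<gamma> s) w" using on_circle_pt[OF r_pos x] by blast
      have "f (pt r (\<gamma> s) w) = 0"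
      proof (rule cdeg_zero[OF cf _ _ _ _ w(1)])
        show "finite W" unfolding W_def by simp
        show "2 * N < card W" using cardW by simp
        fix v assume v: "v \<in> W"
        then obtain jb where jb: "jb \<in> {..N} \<times> UNIV" "v = Wf jb" unfolding W_def by blast
        show "cmod v = 1" using Wprop[OF jb(1)] jb(2) by simp
        have d1: "dist (pt r (\<gamma> s) v) (\<gamma> s) = r" using dist_pt[OF r_pos] Wprop[OF jb(1)] jb(2) by simp
        have d2: "dist (pt r (\<gamma> s) v) (c (fst jb)) = r" using Wprop[OF jb(1)] jb(2) by simp
        have fj: "fst jb \<le> N" using jb(1) by auto
        have e1: "F (pt r (\<gamma> s) v) = Fs (pt r (\<gamma> s) v)" by (rule Fs(2)[OF d1])
        have e2: "F (pt r (\<gamma> s) v) = P (pt r (\<gamma> s) v)" by (rule P(3)[OF fj d2])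
        show "f (pt r (\<gamma> s) v) = 0" unfolding f_def using e1 e2 by simp
      qed
      then show ?thesis using Fs(2)[OF x] w(2) unfolding f_def by simp
    qed
    have Aset_iff: "x \<in> Aset \<gamma> r s0 \<epsilon> \<longleftrightarrow> (\<exists>s. \<bar>s - s0\<bar> \<le> \<epsilon> \<and> dist x (\<gamma> s) = r)" for x
      unfolding Aset_def circ_def by auto
    obtain U G where U: "open U" "Aset \<gamma> r s0 \<epsilon> \<subseteq> U" "smooth_on U G" "\<And>x. x \<in> Aset \<gamma> r s0 \<epsilon> \<Longrightarrow> G x = F x"
      using sm unfolding smooth_on_set_def by blast
    have contG: "continuous_on U G" using U(3) unfolding smooth_on_def by (metis Ck_on.simps(1))
    have "\<forall>x\<in>Aset \<gamma> r s0 \<epsilon>. F x = P x"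
    proof
      fix x assume xA: "x \<in> Aset \<gamma> r s0 \<epsilon>"
      then obtain s where s: "\<bar>s - s0\<bar> \<le> \<epsilon>" "dist x (\<gamma> s) = r" using Aset_iff by blast
      show "F x = P x"
      proof (cases "\<bar>s - s0\<bar> < \<epsilon>")
        case True then show ?thesis using interior s by blast
      next
        case False
        define v where "v = x - \<gamma> s"
        define \<phi> where "\<phi> t = G (\<gamma> t + v) - P (\<gamma> t + v)" for t
        have inA: "\<gamma> t + v \<in> Aset \<gamma> r s0 \<epsilon>" if "t \<in> {s0-\<epsilon>..s0+\<epsilon>}" for t
          unfolding Aset_iff using that s(2) by (intro exI[of _ t]) (auto simp: v_def dist_norm abs_le_iff)
        have cont: "continuous_on (closure {s0-\<epsilon><..<s0+\<epsilon>}) \<phi>"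
        proof -
          have cl: "closure {s0-\<epsilon><..<s0+\<epsilon>} = {s0-\<epsilon>..s0+\<epsilon>}" using \<epsilon> by simp
          have c1: "continuous_on {s0-\<epsilon>..s0+\<epsilon>} (\<lambda>t. \<gamma> t + v)"
            by (intro continuous_intros curve_cont[OF curve])
          have "continuous_on {s0-\<epsilon>..s0+\<epsilon>} (\<lambda>t. G (\<gamma> t + v))"
            by (rule continuous_on_compose2[OF contG c1]) (use inA U(2) in blast)
          moreover have "continuous_on {s0-\<epsilon>..s0+\<epsilon>} (\<lambda>t. P (\<gamma> t + v))"
            by (rule continuous_on_compose2[OF is_poly2_continuous[OF P(1)] c1]) auto
          ultimately show ?thesis unfolding cl \<phi>_def[abs_def] by (intro continuous_on_diff)
        qed
        have "\<phi> s = 0"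
        proof (rule continuous_constant_on_closure[OF cont])
          fix t assume t: "t \<in> {s0-\<epsilon><..<s0+\<epsilon>}"
          then have "\<gamma> t + v \<in> Aset \<gamma> r s0 \<epsilon>" using inA by auto
          moreover have "F (\<gamma> t + v) = P (\<gamma> t + v)"
            using t s(2) by (intro interior[of t]) (auto simp: v_def dist_norm abs_less_iff)
          ultimately show "\<phi> t = 0" unfolding \<phi>_def using U(4) by simp
        next
          show "s \<in> closure {s0-\<epsilon><..<s0+\<epsilon>}" using \<epsilon> s(1) by (auto simp: abs_le_iff)
        qed
        then show ?thesis unfolding \<phi>_def v_def using U(4)[OF xA] by simp
      qed
    qed
    then show "\<exists>P. is_poly2 (2 * N) P \<and> (\<forall>x\<in>Aset \<gamma> r s0 \<epsilon>. F x = P x)" using P(1) by blast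
  qed
qed

end
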